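(* Let $\mathcal V$ be a multivector field on $X$ and let $S\subset X$ be a locally closed, $\mathcal V$-compatible invariant set. Then $S$ is an isolated invariant set (indeed $\operatorname{cl}S$ isolates $S$).
   Context: $X$ is a finite $T_0$ topological space. For $A\subset X$, $\operatorname{cl}A$ is its closure and $\operatorname{mo}A:=\operatorname{cl}A\setminus A$. $A$ is locally closed if it is the intersection of an open and a closed subset of $X$. $H$ denotes relative singular homology. A multivector is a nonempty locally closed subset of $X$; a multivector field $\mathcal V$ on $X$ is a partition of $X$ into multivectors. For $x\in X$, $[x]$ denotes the element of $\mathcal V$ containing $x$. A multivector $V$ is critical if $H(\operatorname{cl}V,\operatorname{mo}V)\neq0$, regular otherwise. $A\subset X$ is $\mathcal V$-compatible if for every $x\in X$ either $[x]\cap A=\emptyset$ or $[x]\subset A$. Put $\Pi_{\mathcal V}(x):=[x]\cup\operatorname{cl}\{x\}$ and $\Pi_{\mathcal V}(A):=\bigcup_{x\in A}\Pi_{\mathcal V}(x)$. A $\mathbb Z$-interval is $\mathbb Z\cap I$ for a real interval $I$. A solution in $A\subset X$ is a map $\varphi:D\to A$ on a $\mathbb Z$-interval $D$ with $\varphi(i+1)\in\Pi_{\mathcal V}(\varphi(i))$ whenever $i,i+1\in D$; it is full if $D=\mathbb Z$, and a path if $D$ is bounded, its endpoints being $\varphi(\min D)$ and $\varphi(\max D)$. A full solution $\varphi$ is essential if for every $t\in\mathbb Z$ with $[\varphi(t)]$ regular, the set $\{s\in\mathbb Z:\varphi(s)\notin[\varphi(t)]\}$ is unbounded below and unbounded above.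 $\operatorname{Inv}A$ is the set of $x\in A$ such that there is an essential full solution $\varphi$ with image in $A$ and $\varphi(0)=x$; $A$ is invariant if $\operatorname{Inv}A=A$. A closed set $N$ isolates an invariant set $S\subset N$ if (a) every path in $N$ with both endpoints in $S$ has image contained in $S$, and (b) $\Pi_{\mathcal V}(S)\subset N$. An invariant set is an isolated invariant set if some closed set isolates it. *)

theory Defs
  imports "HOL-Homology.Homology"
begin

definition t0_top :: "'a topology \<Rightarrow> bool" where
  "t0_top X \<longleftrightarrow>
     (\<forall>x\<in>topspace X. \<forall>y\<in>topspace X. x \<noteq> y \<longrightarrow> (\<exists>U. openin X U \<and> (x \<notin> U \<longleftrightarrow> y \<in> U)))"

definition locally_closed_in :: "'a topology \<Rightarrow> 'a set \<Rightarrow> bool" where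
  "locally_closed_in X A \<longleftrightarrow> (\<exists>U C. openin X U \<and> closedin X C \<and> A = U \<inter> C)"

definition mouth :: "'a topology \<Rightarrow> 'a set \<Rightarrow> 'a set" where
  "mouth X A = X closure_of A - A"

definition multivector :: "'a topology \<Rightarrow> 'a set \<Rightarrow> bool" where
  "multivector X A \<longleftrightarrow> A \<noteq> {} \<and> A \<subseteq> topspace X \<and> locally_closed_in X A"

definition multivector_field :: "'a topology \<Rightarrow> 'a set set \<Rightarrow> bool" where
  "multivector_field X V \<longleftrightarrow>
     (\<forall>A\<in>V. multivector X A) \<and> \<Union>V = topspace X \<and>
     (\<forall>A\<in>V. \<forall>B\<in>V. A \<noteq> B \<longrightarrow> A \<inter> B = {})"

definition cell :: "'a set set \<Rightarrow> 'a \<Rightarrow> 'a set" where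
  "cell V x = (THE A. A \<in> V \<and> x \<in> A)"

definition critical :: "'a topology \<Rightarrow> 'a set \<Rightarrow> bool" where
  "critical X A \<longleftrightarrow>
     (\<exists>p. \<not> trivial_group
            (relative_homology_group p (subtopology X (X closure_of A)) (mouth X A)))"

definition regular :: "'a topology \<Rightarrow> 'a set \<Rightarrow> bool" where
  "regular X A \<longleftrightarrow> \<not> critical X A"

definition compatible :: "'a topology \<Rightarrow> 'a set set \<Rightarrow> 'a set \<Rightarrow> bool" where
  "compatible X V A \<longleftrightarrow> (\<forall>x\<in>topspace X. cell V x \<inter> A = {} \<or> cell V x \<subseteq> A)"

definition Pi_V :: "'a topology \<Rightarrow> 'a set set \<Rightarrow> 'a \<Rightarrow> 'a set" where
  "Pi_V X V x = cell V x \<union> X closure_of {x}"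

definition Pi_V_set :: "'a topology \<Rightarrow> 'a set set \<Rightarrow> 'a set \<Rightarrow> 'a set" where
  "Pi_V_set X V A = (\<Union>x\<in>A. Pi_V X V x)"

definition full_solution :: "'a topology \<Rightarrow> 'a set set \<Rightarrow> 'a set \<Rightarrow> (int \<Rightarrow> 'a) \<Rightarrow> bool" where
  "full_solution X V A \<phi> \<longleftrightarrow> (\<forall>i. \<phi> i \<in> A) \<and> (\<forall>i. \<phi> (i + 1) \<in> Pi_V X V (\<phi> i))"

definition essential :: "'a topology \<Rightarrow> 'a set set \<Rightarrow> (int \<Rightarrow> 'a) \<Rightarrow> bool" where
  "essential X V \<phi> \<longleftrightarrow>
     (\<forall>t. regular X (cell V (\<phi> t)) \<longrightarrow>
        (\<forall>n. \<exists>s\<le>n. \<phi> s \<notin> cell V (\<phi> t)) \<and> (\<forall>n. \<exists>s\<ge>n. \<phi> s \<notin> cell V (\<phi> t)))"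

definition Inv :: "'a topology \<Rightarrow> 'a set set \<Rightarrow> 'a set \<Rightarrow> 'a set" where
  "Inv X V A = {x \<in> A. \<exists>\<phi>. full_solution X V A \<phi> \<and> essential X V \<phi> \<and> \<phi> 0 = x}"

definition invariant :: "'a topology \<Rightarrow> 'a set set \<Rightarrow> 'a set \<Rightarrow> bool" where
  "invariant X V A \<longleftrightarrow> Inv X V A = A"

definition path_in :: "'a topology \<Rightarrow> 'a set set \<Rightarrow> 'a set \<Rightarrow> int \<Rightarrow> int \<Rightarrow> (int \<Rightarrow> 'a) \<Rightarrow> bool" where
  "path_in X V A a b \<phi> \<longleftrightarrow> a \<le> b \<and> (\<forall>i\<in>{a..b}. \<phi> i \<in> A) \<and>
     (\<forall>i. a \<le> i \<and> i < b \<longrightarrow> \<phi> (i + 1) \<in> Pi_V X V (\<phi> i))"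

definition isolates :: "'a topology \<Rightarrow> 'a set set \<Rightarrow> 'a set \<Rightarrow> 'a set \<Rightarrow> bool" where
  "isolates X V N S \<longleftrightarrow> closedin X N \<and> S \<subseteq> N \<and>
     (\<forall>a b \<phi>. path_in X V N a b \<phi> \<and> \<phi> a \<in> S \<and> \<phi> b \<in> S \<longrightarrow> \<phi> ` {a..b} \<subseteq> S) \<and>
     Pi_V_set X V S \<subseteq> N"

definition isolated_invariant_set :: "'a topology \<Rightarrow> 'a set set \<Rightarrow> 'a set \<Rightarrow> bool" where
  "isolated_invariant_set X V S \<longleftrightarrow> invariant X V S \<and> (\<exists>N. isolates X V N S)"

end

theory Submission
  imports Defs
begin

lemma cell_mem:
  assumes "multivector_field X V" "x \<in> topspace X"
  shows "cell V x \<in> V \<and> x \<in> cell V x"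
proof -
  from assms obtain A where A: "A \<in> V" "x \<in> A" unfolding multivector_field_def by blast
  have "\<exists>!A. A \<in> V \<and> x \<in> A"
  proof (rule ex1I[of _ A])
    show "A \<in> V \<and> x \<in> A" using A by simp
    fix B assume "B \<in> V \<and> x \<in> B"
    then show "B = A" using A assms(1) unfolding multivector_field_def by (metis disjoint_iff)
  qed
  then show ?thesis unfolding cell_def by (rule theI')
qed

theorem proposition4p12:
  fixes X :: "'a topology" and V :: "'a set set" and S :: "'a set"
  assumes "finite (topspace X)" and "t0_top X"
    and "multivector_field X V"
    and "S \<subseteq> topspace X"
    and "locally_closed_in X S"
    and "compatible X V S"
    and "invariant X V S"
  shows "isolated_invariant_set X V S \<and> isolates X V (X closure_of S) S"
proof -
  from assms(5) obtain U C where UC: "openin X U" "closedin X C" "S = U \<inter> C"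
    unfolding locally_closed_in_def by blast
  have clC: "X closure_of S \<subseteq> C" using UC closure_of_minimal[of S C X] by auto
  have SU: "S = U \<inter> X closure_of S" using UC clC closure_of_subset[OF assms(4)] by auto
  have clMo: "closedin X (X closure_of S - U)" using UC by (simp add: closedin_diff)
  have stepS: "y \<notin> S" if "x \<in> X closure_of S" "x \<notin> S" "y \<in> Pi_V X V x" for x y
  proof -
    have xt: "x \<in> topspace X" using that(1) closure_of_subset_topspace[of X S] by (meson subsetD)
    have c: "cell V x \<in> V \<and> x \<in> cell V x" using cell_mem[OF assms(3) xt] .
    have "cell V x \<inter> S = {}" using assms(6) xt c that(2) unfolding compatible_def by blast
    moreover have "X closure_of {x} \<subseteq> X closure_of S - U"
    proof (rule closure_of_minimal[OF _ clMo])
      show "{x} \<subseteq> X closure_of S - U" using that(1,2) SU by auto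
    qed
    moreover have "y \<in> S \<Longrightarrow> y \<in> U" using SU by blast
    ultimately show ?thesis using that(3) unfolding Pi_V_def by auto
  qed
  have path: "\<phi> ` {a..b} \<subseteq> S" if "path_in X V (X closure_of S) a b \<phi>" "\<phi> a \<in> S" "\<phi> b \<in> S"
    for a b \<phi>
  proof (rule ccontr)
    assume "\<not> \<phi> ` {a..b} \<subseteq> S"
    then obtain i where i: "a \<le> i" "i \<le> b" "\<phi> i \<notin> S" by (auto simp: image_subset_iff)
    have "j \<le> b \<longrightarrow> \<phi> j \<notin> S" if "i \<le> j" for j
      using that
    proof (induction j rule: int_ge_induct)
      case base then show ?case using i by blast
    next
      case (step j)
      show ?case
      proof (intro impI)
        assume jb: "j + 1 \<le> b"
        have "\<phi> j \<in> X closure_of S" using \<open>path_in X V (X closure_of S) a b \<phi>\<close> step(1) i jb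
          unfolding path_in_def by simp
        moreover have "\<phi> (j+1) \<in> Pi_V X V (\<phi> j)"
          using \<open>path_in X V (X closure_of S) a b \<phi>\<close> step(1) i jb unfolding path_in_def by simp
        moreover have "\<phi> j \<notin> S" using step(2) jb by simp
        ultimately show "\<phi> (j+1) \<notin> S" using stepS by blast
      qed
    qed
    from this[of b] show False using i that(3) by simp
  qed
  have pis: "Pi_V_set X V S \<subseteq> X closure_of S"
  proof
    fix y assume "y \<in> Pi_V_set X V S"
    then obtain x where x: "x \<in> S" "y \<in> Pi_V X V x" unfolding Pi_V_set_def by blast
    have xt: "x \<in> topspace X" using x assms(4) by blast
    have c: "cell V x \<in> V \<and> x \<in> cell V x" using cell_mem[OF assms(3) xt] .
    have "cell V x \<subseteq> S" using assms(6) xt c x(1) unfolding compatible_def by blast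
    moreover have "X closure_of {x} \<subseteq> X closure_of S" by (rule closure_of_mono) (use x(1) in simp)
    ultimately show "y \<in> X closure_of S" using x(2) closure_of_subset[OF assms(4)]
      unfolding Pi_V_def by auto
  qed
  have iso: "isolates X V (X closure_of S) S"
    unfolding isolates_def using path pis closure_of_subset[OF assms(4)] by auto
  then show ?thesis using assms(7) unfolding isolated_invariant_set_def by blast
qed

end
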